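(* Let $a,n,r\in\mathbb{N}$ (so $r\ge1$), $k_1,\ldots,k_n\in\mathbb{N}$, and let $f_1,\ldots,f_n$ be arbitrary arithmetic functions. Then $$\frac{1}{K^{ar}}\sum_{j=1}^{K^a} j^r\prod_{i=1}^n\Bigl(\sum_{d_i|k_i,\ d_i^a|j}(f_i*\mu)(d_i)\Bigr)=\frac12\prod_{i=1}^n f_i(k_i)+\frac{1}{r+1}\sum_{m=0}^{\lfloor r/2\rfloor}\binom{r+1}{2m}\frac{B_{2m}}{K^{a(2m-1)}}\sum_{d_1|k_1,\ldots,d_n|k_n}\bigl(\operatorname{lcm}(d_1,\ldots,d_n)\bigr)^{a(2m-1)}\prod_{i=1}^n (f_i*\mu)(d_i).$$
   Context: An arithmetic function is a map $\mathbb{N}\to\mathbb{C}$; $\mu$ is the Möbius function and $(f*g)(n)=\sum_{d|n}f(d)g(n/d)$ the Dirichlet convolution. $K=\operatorname{lcm}(k_1,\ldots,k_n)$. The Bernoulli numbers $B_m$ are defined by $\frac{t}{e^t-1}=\sum_{m\ge0}B_m\frac{t^m}{m!}$. *)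

theory Defs
  imports Complex_Main "HOL-Computational_Algebra.Formal_Power_Series"
    "HOL-Computational_Algebra.Squarefree"
begin

text \<open>Dirichlet convolution of arithmetic functions (only meaningful for n >= 1).\<close>
definition dirichlet_conv :: "(nat \<Rightarrow> complex) \<Rightarrow> (nat \<Rightarrow> complex) \<Rightarrow> nat \<Rightarrow> complex" where
  "dirichlet_conv f g n = (\<Sum>d | d dvd n. f d * g (n div d))"

definition moebius :: "nat \<Rightarrow> complex" where
  "moebius n = (if squarefree n then (-1) ^ card (prime_factors n) else 0)"

definition bernoulli :: "nat \<Rightarrow> complex" where
  "bernoulli m = fact m * fps_nth (fps_X / (fps_exp 1 - 1) :: complex fps) m"

end

theory Submission
  imports Defs
begin
unbundle fps_syntax


definition bE :: "complex fps" where "bE = fps_exp 1 - 1"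
definition bB :: "complex fps" where "bB = fps_X / bE"

lemma bE_nth: "bE $ n = (if n = 0 then 0 else 1 / fact n)"
  by (simp add: bE_def fps_exp_def)

lemma bE_nz: "bE \<noteq> 0"
proof
  assume "bE = 0" then have "bE $ 1 = 0" by simp
  then show False by (simp add: bE_nth)
qed

lemma bE_subdeg: "subdegree bE = 1"
  by (rule subdegreeI) (auto simp: bE_nth)

lemma bB_mult: "bB * bE = fps_X"
  unfolding bB_def by (rule fps_times_divide_eq) (auto simp: bE_nz bE_subdeg)

lemma bernoulli_bB: "bernoulli m = fact m * bB $ m"
  by (simp add: bernoulli_def bB_def bE_def)

lemma bB_parity: "bB oo (-fps_X) = fps_X + bB"
proof -
  have c0: "(-fps_X :: complex fps) $ 0 = 0" by simp
  let ?C = "bB oo (-fps_X)"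
  have nx: "(-fps_X :: complex fps) = fps_const (-1) * fps_X"
    by (simp add: fps_const_neg[symmetric])
  have e1: "fps_exp (1::complex) oo (-fps_X) = fps_exp (-1)"
    unfolding nx by simp
  have "?C * (bE oo (-fps_X)) = fps_X oo (-fps_X)"
    using fps_compose_mult_distrib[OF c0, of bB bE] bB_mult by simp
  also have "\<dots> = - fps_X" by simp
  finally have h: "?C * (fps_exp (-1) - 1) = - fps_X"
    by (simp add: bE_def fps_compose_sub_distrib e1)
  have ee: "fps_exp (-1::complex) * fps_exp 1 = 1"
    using fps_exp_add_mult[of "-1::complex" 1] by simp
  have "?C * (fps_exp (-1) - 1) * fps_exp 1 = - fps_X * fps_exp 1"
    using h by simp
  moreover have "?C * (fps_exp (-1) - 1) * fps_exp 1 = ?C * (fps_exp (-1) * fps_exp 1) - ?C * fps_exp 1"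
    by (simp add: algebra_simps)
  moreover have "\<dots> = ?C * (1 - fps_exp 1)" by (simp only: ee right_diff_distrib mult_1_right)
  ultimately have "?C * (1 - fps_exp 1) = - fps_X * fps_exp 1"
    by simp
  then have "?C * bE = fps_X * (bE + 1)"
    by (simp add: bE_def algebra_simps)
  also have "\<dots> = (fps_X + bB) * bE"
    using bB_mult by (simp add: algebra_simps)
  finally show ?thesis using bE_nz by simp
qed

lemma bB_odd: "odd m \<Longrightarrow> bB $ m = (if m = 1 then -1/2 else 0)"
proof -
  assume "odd m"
  have "(bB oo (-fps_X)) $ m = (fps_X + bB) $ m" by (simp add: bB_parity)
  then have "- bB $ m = (if m = 1 then 1 else 0) + bB $ m"
    using \<open>odd m\<close> by (simp add: fps_compose_uminus')
  moreover have "\<And>x::complex. 1 + 2 * x = 0 \<Longrightarrow> x = - (1/2)"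
  proof -
    fix x :: complex assume "1 + 2 * x = 0"
    moreover have "x = ((1 + 2 * x) - 1) / 2" by simp
    ultimately show "x = - (1/2)" by simp
  qed
  ultimately show ?thesis by (cases "m = 1") (auto simp: algebra_simps)
qed



lemma telesc: "(\<Sum>t<N. fps_exp (of_nat t :: complex)) * bE = fps_exp (of_nat N) - 1"
proof (induction N)
  case 0 then show ?case by simp
next
  case (Suc N)
  have "fps_exp (of_nat N :: complex) * fps_exp 1 = fps_exp (of_nat (Suc N))"
    by (simp add: fps_exp_add_mult[symmetric] add.commute)
  then show ?case using Suc by (simp add: algebra_simps bE_def)
qed

lemma faul0:
  "(\<Sum>t<N. of_nat t ^ r :: complex) =
     (\<Sum>i=0..r. fact r * bB $ i * of_nat N ^ (Suc r - i) / fact (Suc r - i))"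
proof -
  let ?F = "\<Sum>t<N. fps_exp (of_nat t :: complex)"
  have eq: "fps_X * ?F = bB * (fps_exp (of_nat N) - 1)"
    using telesc[of N] bB_mult by (metis mult.assoc mult.commute)
  have "(fps_X * ?F) $ Suc r = (\<Sum>t<N. of_nat t ^ r) / fact r"
    by (simp add: fps_sum_nth sum_divide_distrib)
  moreover have "(bB * (fps_exp (of_nat N) - 1)) $ Suc r =
      (\<Sum>i=0..Suc r. bB $ i * (fps_exp (of_nat N) - 1) $ (Suc r - i))"
    by (rule fps_mult_nth)
  moreover have "\<dots> = (\<Sum>i=0..r. bB $ i * (fps_exp (of_nat N) - 1) $ (Suc r - i))"
    by (simp add: sum.atLeast0_atMost_Suc)
  moreover have "\<dots> = (\<Sum>i=0..r. bB $ i * of_nat N ^ (Suc r - i) / fact (Suc r - i))"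
  proof (intro sum.cong refl)
    have ex: "(fps_exp (of_nat N :: complex) - 1) $ j = of_nat N ^ j / fact j" if "j \<noteq> 0" for j
      using that by simp
    fix i assume "i \<in> {0..r}"
    then have "Suc r - i \<noteq> 0" by auto
    then show "bB $ i * (fps_exp (of_nat N) - 1) $ (Suc r - i) = bB $ i * of_nat N ^ (Suc r - i) / fact (Suc r - i)"
      by (simp only: ex[OF \<open>Suc r - i \<noteq> 0\<close>] times_divide_eq_right)
  qed
  ultimately have "(\<Sum>t<N. of_nat t ^ r) / fact r =
      (\<Sum>i=0..r. bB $ i * of_nat N ^ (Suc r - i) / fact (Suc r - i))"
    using eq by simp
  then have "(\<Sum>t<N. of_nat t ^ r) = fact r * (\<Sum>i=0..r. bB $ i * of_nat N ^ (Suc r - i) / fact (Suc r - i))"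
    by (simp add: field_simps)
  then show ?thesis by (simp add: sum_distrib_left mult.assoc)
qed

lemma even_split:
  fixes c :: "nat \<Rightarrow> complex"
  shows "(\<Sum>i=0..r. (if even i then c i else 0)) = (\<Sum>m=0..r div 2. c (2 * m))"
proof -
  have "(\<Sum>m=0..r div 2. c (2 * m)) = (\<Sum>i\<in>(\<lambda>m. 2 * m) ` {0..r div 2}. c i)"
    by (subst sum.reindex) (auto simp: inj_on_def)
  also have "\<dots> = (\<Sum>i\<in>(\<lambda>m. 2 * m) ` {0..r div 2}. (if even i then c i else 0))"
    by (intro sum.cong) auto
  also have "\<dots> = (\<Sum>i=0..r. (if even i then c i else 0))"
  proof (rule sum.mono_neutral_left)
    show "(\<lambda>m. 2 * m) ` {0..r div 2} \<subseteq> {0..r}" by auto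
    show "\<forall>i\<in>{0..r} - (\<lambda>m. 2 * m) ` {0..r div 2}. (if even i then c i else 0) = 0"
    proof
      fix i assume "i \<in> {0..r} - (\<lambda>m. 2 * m) ` {0..r div 2}"
      then have "i \<le> r" "\<And>m. m \<le> r div 2 \<Longrightarrow> i \<noteq> 2 * m" by auto
      then show "(if even i then c i else 0) = 0"
        by (auto elim!: evenE) (metis div_le_mono nonzero_mult_div_cancel_left zero_neq_numeral)
    qed
  qed auto
  finally show ?thesis by simp
qed

lemma faulhaber:
  assumes "r \<ge> 1"
  shows "(\<Sum>t=1..N. of_nat t ^ r :: complex) = of_nat N ^ r / 2 +
     1 / of_nat (r + 1) * (\<Sum>m=0..r div 2. of_nat ((r + 1) choose (2 * m)) * bernoulli (2 * m) * of_nat N ^ (r + 1 - 2 * m))"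
proof -
  define c where "c i = 1 / of_nat (r + 1) * (of_nat ((r + 1) choose i) * bernoulli i * of_nat N ^ (r + 1 - i) :: complex)" for i
  have ci: "fact r * bB $ i * of_nat N ^ (Suc r - i) / fact (Suc r - i) = c i" if "i \<le> r" for i
  proof -
    have "of_nat ((r + 1) choose i) = (fact (r+1) / (fact i * fact (r + 1 - i)) :: complex)"
      using that by (intro binomial_fact) simp
    moreover have "(fact (r+1) :: complex) = of_nat (r+1) * fact r" by simp
    ultimately show ?thesis unfolding c_def bernoulli_bB
      by (simp add: field_simps del: of_nat_Suc)
  qed
  have "(\<Sum>t=1..N. of_nat t ^ r :: complex) = (\<Sum>t<Suc N. of_nat t ^ r)"
  proof -
    have "(\<Sum>t<Suc N. of_nat t ^ r :: complex) = (\<Sum>t\<in>insert 0 {1..N}. of_nat t ^ r)"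
      by (intro sum.cong) auto
    also have "\<dots> = (\<Sum>t=1..N. of_nat t ^ r)" using assms by simp
    finally show ?thesis by simp
  qed
  also have "\<dots> = (\<Sum>t<N. of_nat t ^ r) + of_nat N ^ r" by simp
  also have "(\<Sum>t<N. of_nat t ^ r :: complex) = (\<Sum>i=0..r. c i)"
    unfolding faul0 by (intro sum.cong) (auto simp: ci)
  also have "(\<Sum>i=0..r. c i) = (\<Sum>i=0..r. (if even i then c i else 0)) + (\<Sum>i=0..r. (if i = 1 then c i else 0))"
    unfolding sum.distrib[symmetric]
  proof (intro sum.cong refl)
    fix i assume "i \<in> {0..r}"
    show "c i = (if even i then c i else 0) + (if i = 1 then c i else 0)"
    proof (cases "even i")
      case False
      then have "bernoulli i = (if i = 1 then -1/2 else 0)"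
        by (simp add: bernoulli_bB bB_odd)
      then show ?thesis using False by (cases "i = 1") (auto simp: c_def)
    qed auto
  qed
  also have "(\<Sum>i=0..r. (if i = 1 then c i else 0)) = c 1"
    using assms by (simp add: sum.delta)
  also have "c 1 = - (of_nat N ^ r / 2)"
  proof -
    have "bernoulli 1 = -1/2" by (simp add: bernoulli_bB bB_odd)
    have r0: "(of_nat (r + 1) :: complex) \<noteq> 0" by (simp del: of_nat_Suc)
    have "c 1 = 1 / of_nat (r + 1) * of_nat (r + 1) * (- (of_nat N ^ r / 2))"
      unfolding c_def using \<open>bernoulli 1 = -1/2\<close> by (simp del: of_nat_Suc)
    also have "\<dots> = - (of_nat N ^ r / 2)" using r0 by simp
    finally show ?thesis .
  qed
  also have "(\<Sum>i=0..r. (if even i then c i else 0)) = (\<Sum>m=0..r div 2. c (2 * m))"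
    by (rule even_split)
  finally show ?thesis unfolding c_def by (simp add: sum_distrib_left)
qed



lemma pf_prod:
  fixes S :: "nat set"
  assumes "finite S" "\<And>p. p \<in> S \<Longrightarrow> prime p"
  shows "prime_factorization (\<Prod>S) = mset_set S"
proof -
  have "\<Prod>S = prod_mset (mset_set S)"
    using prod_unfold_prod_mset[of "\<lambda>x. x" S] by simp
  also have "prime_factorization \<dots> = mset_set S"
    using assms by (intro prime_factorization_prod_mset_primes) auto
  finally show ?thesis .
qed

lemma prod_nz:
  fixes S :: "nat set"
  assumes "finite S" "\<And>p. p \<in> S \<Longrightarrow> prime p"
  shows "\<Prod>S \<noteq> 0"
  using assms by (metis prod_zero_iff not_prime_0)

lemma sqf_prod:
  fixes S :: "nat set"
  assumes "finite S" "\<And>p. p \<in> S \<Longrightarrow> prime p"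
  shows "squarefree (\<Prod>S)"
proof -
  have nz: "\<Prod>S \<noteq> 0" by (rule prod_nz[OF assms])
  show ?thesis
  proof (subst squarefree_factorial_semiring''[OF nz], intro allI impI)
    fix p :: nat assume "prime p"
    then have "multiplicity p (\<Prod>S) = count (prime_factorization (\<Prod>S)) p"
      by (simp add: count_prime_factorization_prime)
    also have "\<dots> = count (mset_set S) p" by (simp add: pf_prod[OF assms])
    also have "\<dots> \<le> 1" using assms(1) by (simp add: count_mset_set')
    finally show "multiplicity p (\<Prod>S) \<le> 1" .
  qed
qed

lemma sqf_eq_prod:
  fixes d :: nat
  assumes "squarefree d"
  shows "\<Prod>(prime_factors d) = d"
proof -
  have d0: "d \<noteq> 0" using assms by (metis not_squarefree_0)
  have "prime_factorization d = mset_set (prime_factors d)"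
  proof (rule multiset_eqI)
    fix p
    show "count (prime_factorization d) p = count (mset_set (prime_factors d)) p"
    proof (cases "prime p")
      case True
      have "multiplicity p d \<le> 1"
        using assms d0 True squarefree_factorial_semiring'' by blast
      show ?thesis
      proof (cases "p dvd d")
        case dv: True
        have "multiplicity p d > 0"
          using prime_multiplicity_gt_zero_iff[of p d] d0 True dv by auto
        then have m1: "multiplicity p d = 1" using \<open>multiplicity p d \<le> 1\<close> by linarith
        have "p \<in> prime_factors d" using True dv d0 by (simp add: in_prime_factors_iff)
        then show ?thesis using True m1 by (simp add: count_prime_factorization_prime count_mset_set')
      next
        case ndv: False
        have "p \<notin> prime_factors d" using ndv by (simp add: in_prime_factors_iff)
        then show ?thesis using True ndv
          by (simp add: count_prime_factorization_prime count_mset_set' not_dvd_imp_multiplicity_0)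
      qed
    next
      case False
      then show ?thesis
        by (auto simp: count_prime_factorization_nonprime count_mset_set')
    qed
  qed
  then have "prod_mset (prime_factorization d) = prod_mset (mset_set (prime_factors d))" by simp
  then show ?thesis using d0 prod_unfold_prod_mset[of "\<lambda>x. x" "prime_factors d"] by simp
qed

lemma moebius_sum:
  assumes "m > 0"
  shows "(\<Sum>d | d dvd m. moebius d) = (if m = 1 then 1 else 0)"
proof -
  define P where "P = prime_factors m"
  have fP: "finite P" by (simp add: P_def)
  have pP: "\<And>p. p \<in> S \<Longrightarrow> S \<subseteq> P \<Longrightarrow> prime p" for S
    unfolding P_def by (auto intro: in_prime_factors_imp_prime)
  define D where "D = {d. d dvd m \<and> squarefree d}"
  have fin: "finite {d. d dvd m}" using assms by simp
  have "(\<Sum>d | d dvd m. moebius d) = (\<Sum>d\<in>D. (-1) ^ card (prime_factors d))"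
  proof -
    have "(\<Sum>d | d dvd m. moebius d) = (\<Sum>d\<in>D. moebius d)"
      by (rule sum.mono_neutral_right[OF fin]) (auto simp: D_def moebius_def)
    then show ?thesis by (simp add: D_def moebius_def)
  qed
  also have "\<dots> = (\<Sum>S\<in>Pow P. (-1) ^ card (prime_factors (\<Prod>S)))"
  proof (rule sum.reindex_bij_betw[symmetric], rule bij_betw_byWitness[where f' = prime_factors])
    show "\<forall>S\<in>Pow P. prime_factors (\<Prod>S) = S"
    proof
      fix S assume S: "S \<in> Pow P"
      then have "finite S" using fP finite_subset by auto
      then show "prime_factors (\<Prod>S) = S" using S pP[of _ S] by (simp add: pf_prod)
    qed
    show "\<forall>d\<in>D. \<Prod>(prime_factors d) = d" by (auto simp: D_def sqf_eq_prod)
    show "Prod ` Pow P \<subseteq> D"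
    proof
      fix d assume "d \<in> Prod ` Pow P"
      then obtain S where S: "S \<subseteq> P" "d = \<Prod>S" by auto
      then have fS: "finite S" using fP finite_subset by auto
      have pr: "\<And>p. p \<in> S \<Longrightarrow> prime p" using pP S by auto
      have prP: "\<And>p. p \<in> P \<Longrightarrow> prime p" using pP by auto
      have "\<Prod>S dvd \<Prod>P" using S fP by (intro prod_dvd_prod_subset)
      moreover have "\<Prod>P dvd m"
      proof -
        have "prime_factorization (\<Prod>P) \<subseteq># prime_factorization m"
          using pf_prod[OF fP prP] mset_set_set_mset_msubset[of "prime_factorization m"]
          by (simp add: P_def)
        then show ?thesis
          using prime_factorization_subset_iff_dvd[of "\<Prod>P" m] prod_nz[OF fP prP] assms by simp
      qed
      ultimately show "d \<in> D" using S sqf_prod[OF fS pr] by (auto simp: D_def intro: dvd_trans)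
    qed
    show "prime_factors ` D \<subseteq> Pow P"
      using assms dvd_prime_factors[of m] by (auto simp: D_def P_def)
  qed
  also have "\<dots> = (\<Sum>S\<in>Pow P. (-1) ^ card S)"
  proof (rule sum.cong[OF refl])
    fix S assume S: "S \<in> Pow P"
    then have "finite S" using fP finite_subset by auto
    then show "(-1) ^ card (prime_factors (\<Prod>S)) = ((-1) ^ card S :: complex)"
      using S pP[of _ S] by (simp add: pf_prod)
  qed
  also have "\<dots> = (\<Prod>x\<in>P. (1::complex) - 1)"
    using prod_diff_conv_sum[OF fP, of "\<lambda>_. 1::complex" "\<lambda>_. 1::complex"] by simp
  also have "\<dots> = (if m = 1 then 1 else 0)"
  proof -
    have "P = {} \<longleftrightarrow> m = 1"
      using assms prime_factorization_empty_iff[of m] unfolding P_def by auto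
    then show ?thesis using fP by (auto simp: card_gt_0_iff)
  qed
  finally show ?thesis .
qed

lemma mobius_inversion:
  assumes "k > 0"
  shows "(\<Sum>d | d dvd k. dirichlet_conv f moebius d) = f k"
proof -
  have "(\<Sum>d | d dvd k. dirichlet_conv f moebius d) =
        (\<Sum>d | d dvd k. \<Sum>e | e dvd d. f e * moebius (d div e))"
    by (simp add: dirichlet_conv_def)
  also have "\<dots> = (\<Sum>(d, e)\<in>Sigma {d. d dvd k} (\<lambda>d. {e. e dvd d}). f e * moebius (d div e))"
    using assms by (subst sum.Sigma) auto
  also have "\<dots> = (\<Sum>(e, c)\<in>Sigma {e. e dvd k} (\<lambda>e. {c. c dvd k div e}). f e * moebius c)"
  proof (rule sum.reindex_bij_witness[where i = "\<lambda>(e, c). (e * c, e)" and j = "\<lambda>(d, e). (e, d div e)"])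
    fix x assume "x \<in> Sigma {d. d dvd k} (\<lambda>d. {e. e dvd d})"
    then obtain d e where x: "x = (d, e)" "d dvd k" "e dvd d" by auto
    then show "(case (case x of (d, e) \<Rightarrow> (e, d div e)) of (e, c) \<Rightarrow> (e * c, e)) = x" by auto
    show "(case x of (d, e) \<Rightarrow> (e, d div e)) \<in> Sigma {e. e dvd k} (\<lambda>e. {c. c dvd k div e})"
      using x assms by (auto intro: dvd_trans div_dvd_div)
    show "(case (case x of (d, e) \<Rightarrow> (e, d div e)) of (e, c) \<Rightarrow> f e * moebius c) =
          (case x of (d, e) \<Rightarrow> f e * moebius (d div e))" using x by auto
  next
    fix y assume "y \<in> Sigma {e. e dvd k} (\<lambda>e. {c. c dvd k div e})"
    then obtain e c where y: "y = (e, c)" "e dvd k" "c dvd k div e" by auto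
    then have e0: "e > 0" using assms by (auto intro: Nat.gr0I)
    show "(case (case y of (e, c) \<Rightarrow> (e * c, e)) of (d, e) \<Rightarrow> (e, d div e)) = y" using y e0 by auto
    show "(case y of (e, c) \<Rightarrow> (e * c, e)) \<in> Sigma {d. d dvd k} (\<lambda>d. {e. e dvd d})"
      using y e0 dvd_div_iff_mult[of e k c] by (auto simp: mult.commute)
  qed
  also have "\<dots> = (\<Sum>e | e dvd k. f e * (\<Sum>c | c dvd k div e. moebius c))"
    using assms by (subst sum.Sigma[symmetric]) (auto simp: sum_distrib_left)
  also have "\<dots> = (\<Sum>e | e dvd k. (if e = k then f e else 0))"
  proof (rule sum.cong[OF refl])
    fix e assume "e \<in> {e. e dvd k}"
    then obtain q where q: "k = e * q" by auto
    then have e0: "e > 0" "q > 0" using assms by auto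
    then have kq: "k div e = q" using q by simp
    have "k div e > 0" "k div e = 1 \<longleftrightarrow> e = k" using q e0 unfolding kq by auto
    then show "f e * (\<Sum>c | c dvd k div e. moebius c) = (if e = k then f e else 0)"
      by (simp add: moebius_sum)
  qed
  also have "\<dots> = f k" using assms by (simp add: sum.delta)
  finally show ?thesis .
qed



lemma lcm_pow: "lcm (x ^ a) (y ^ a) = (lcm x y) ^ a" for x y :: nat
proof (cases "x = 0 \<or> y = 0 \<or> a = 0")
  case True then show ?thesis by (auto simp: power_0_left)
next
  case False
  then have g0: "gcd x y ^ a \<noteq> 0" by simp
  have "gcd x y ^ a * lcm (x ^ a) (y ^ a) = gcd (x ^ a) (y ^ a) * lcm (x ^ a) (y ^ a)" by simp
  also have "\<dots> = x ^ a * y ^ a" by (rule prod_gcd_lcm_nat[symmetric])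
  also have "\<dots> = (gcd x y * lcm x y) ^ a" by (metis prod_gcd_lcm_nat power_mult_distrib)
  also have "\<dots> = gcd x y ^ a * lcm x y ^ a" by (rule power_mult_distrib)
  finally show ?thesis using g0 by (metis mult_left_cancel)
qed

lemma Lcm_pow:
  fixes d :: "'a \<Rightarrow> nat"
  assumes "finite A"
  shows "Lcm ((\<lambda>i. d i ^ a) ` A) = Lcm (d ` A) ^ a"
  using assms by (induction A rule: finite_induct) (auto simp: lcm_pow)

lemma Lcm_pow_dvd:
  fixes d :: "'a \<Rightarrow> nat"
  assumes "finite A"
  shows "(\<forall>i\<in>A. d i ^ a dvd j) \<longleftrightarrow> Lcm (d ` A) ^ a dvd j"
  using Lcm_pow[OF assms, of d a, symmetric] by (simp add: Lcm_dvd_iff)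

lemma prod_if_zero:
  fixes x :: "'a \<Rightarrow> 'b::comm_semiring_1"
  assumes "finite A"
  shows "(\<Prod>i\<in>A. if P i then x i else 0) = (if \<forall>i\<in>A. P i then prod x A else 0)"
proof (cases "\<forall>i\<in>A. P i")
  case True then show ?thesis by (auto intro: prod.cong)
next
  case False
  then obtain i where "i \<in> A" "\<not> P i" by auto
  then have "(\<Prod>i\<in>A. if P i then x i else 0) = 0"
    using assms by (intro prod_zero) auto
  then show ?thesis using False by auto
qed

lemma mult_sum:
  fixes h :: "nat \<Rightarrow> complex"
  assumes "c > 0"
  shows "(\<Sum>j=1..c * N. (if c dvd j then h j else 0)) = (\<Sum>t=1..N. h (c * t))"
proof -
  have "(\<Sum>j=1..c * N. (if c dvd j then h j else 0)) = (\<Sum>j\<in>{j\<in>{1..c*N}. c dvd j}. h j)"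
    by (rule sum.inter_filter[symmetric]) simp
  also have "{j\<in>{1..c*N}. c dvd j} = (\<lambda>t. c * t) ` {1..N}"
  proof
    show "{j\<in>{1..c*N}. c dvd j} \<subseteq> (\<lambda>t. c * t) ` {1..N}"
    proof
      fix j assume "j \<in> {j\<in>{1..c*N}. c dvd j}"
      then obtain t where "j = c * t" "1 \<le> c * t" "c * t \<le> c * N" by auto
      then show "j \<in> (\<lambda>t. c * t) ` {1..N}" using assms by auto
    qed
  qed (use assms in auto)
  also have "(\<Sum>j\<in>(\<lambda>t. c * t) ` {1..N}. h j) = (\<Sum>t=1..N. h (c * t))"
    using assms by (subst sum.reindex) (auto simp: inj_on_def)
  finally show ?thesis .
qed

lemma pow_identity:
  fixes x y :: complex
  assumes "x \<noteq> 0" "y \<noteq> 0" "2 * m \<le> r"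
  shows "1 / x ^ (a * r) * y ^ (a * r) * (x ^ a / y ^ a) ^ (r + 1 - 2 * m) =
         y powi (int a * (2 * int m - 1)) / x powi (int a * (2 * int m - 1))"
proof -
  define q where "q = y / x"
  define s where "s = r + 1 - 2 * m"
  have q0: "q \<noteq> 0" using assms by (simp add: q_def)
  have 1: "1 / x ^ (a * r) * y ^ (a * r) = q ^ (a * r)" by (simp add: q_def power_divide)
  have 2: "(x ^ a / y ^ a) ^ s = inverse (q ^ (a * s))"
    by (simp add: q_def power_divide power_mult)
  have "1 / x ^ (a * r) * y ^ (a * r) * (x ^ a / y ^ a) ^ (r + 1 - 2 * m) =
           q powi (int (a * r)) * q powi (- int (a * s))"
    unfolding s_def[symmetric] 1 2 by (simp only: power_int_minus power_int_of_nat)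
  also have "\<dots> = q powi (int (a * r) + (- int (a * s)))"
    using q0 by (intro power_int_add[symmetric]) simp
  also have "int (a * r) + (- int (a * s)) = int a * (2 * int m - 1)"
  proof -
    have "s + 2 * m = r + 1" using assms by (simp add: s_def)
    then have "a * s + a * (2 * m) = a * r + a" by (metis add_mult_distrib2 mult.commute mult_Suc Suc_eq_plus1 add.commute)
    then have "int (a * s) + int a * (2 * int m) = int (a * r) + int a"
      by (metis of_nat_add of_nat_mult of_nat_numeral)
    then show ?thesis by (simp add: algebra_simps)
  qed
  also have "q powi (int a * (2 * int m - 1)) = y powi (int a * (2 * int m - 1)) / x powi (int a * (2 * int m - 1))"
    by (simp add: q_def power_int_divide_distrib)
  finally show ?thesis .
qed


theorem mainTheorem3:
  fixes a n r :: nat and k :: "nat \<Rightarrow> nat" and f :: "nat \<Rightarrow> nat \<Rightarrow> complex"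
  assumes "a \<ge> 1" "n \<ge> 1" "r \<ge> 1" "\<And>i. i \<in> {1..n} \<Longrightarrow> k i \<ge> 1"
  defines "K \<equiv> Lcm (k ` {1..n})"
  shows "(1 / of_nat K ^ (a * r)) *
      (\<Sum>j = 1..K ^ a. of_nat j ^ r *
         (\<Prod>i = 1..n. \<Sum>d | d dvd k i \<and> d ^ a dvd j. dirichlet_conv (f i) moebius d))
    = (1/2) * (\<Prod>i = 1..n. f i (k i))
      + (1 / of_nat (r + 1)) *
        (\<Sum>m = 0..r div 2. of_nat ((r + 1) choose (2 * m)) * bernoulli (2 * m)
           / (of_nat K powi (int a * (2 * int m - 1)))
           * (\<Sum>d \<in> Pi\<^sub>E {1..n} (\<lambda>i. {e. e dvd k i}).
                (of_nat (Lcm (d ` {1..n}))) powi (int a * (2 * int m - 1))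
                * (\<Prod>i = 1..n. dirichlet_conv (f i) moebius (d i))))"
proof -
  define g where "g i d = dirichlet_conv (f i) moebius d" for i d
  define D where "D = Pi\<^sub>E {1..n} (\<lambda>i. {e. e dvd k i})"
  define L where "L d = Lcm (d ` {1..n})" for d :: "nat \<Rightarrow> nat"
  define P where "P d = (\<Prod>i = 1..n. g i (d i))" for d :: "nat \<Rightarrow> nat"
  define E where "E m = int a * (2 * int m - 1)" for m :: nat
  define C where "C m = of_nat ((r + 1) choose (2 * m)) * bernoulli (2 * m)" for m :: nat
  have kpos: "\<And>i. i \<in> {1..n} \<Longrightarrow> k i > 0" using assms(4) by fastforce
  have fin_dv: "\<And>i. i \<in> {1..n} \<Longrightarrow> finite {e. e dvd k i}" using kpos by simp
  have fD: "finite D" unfolding D_def using fin_dv by (intro finite_PiE) auto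
  have K0: "K > 0"
  proof -
    have "0 \<notin> k ` {1..n}" using kpos by force
    then have "K \<noteq> 0" unfolding K_def by (simp add: Lcm_0_iff)
    then show ?thesis by simp
  qed
  have Ld: "L d > 0 \<and> L d dvd K" if "d \<in> D" for d
  proof -
    have dk: "\<And>i. i \<in> {1..n} \<Longrightarrow> d i dvd k i" using that by (auto simp: D_def)
    have "0 \<notin> d ` {1..n}" using dk kpos by (metis dvd_0_left_iff imageE less_irrefl)
    then have "L d \<noteq> 0" unfolding L_def by (simp add: Lcm_0_iff)
    moreover have "L d dvd K"
      unfolding L_def K_def Lcm_dvd_iff
    proof
      fix z assume "z \<in> d ` {1..n}"
      then obtain y where y: "y \<in> {1..n}" "z = d y" by auto
      then show "z dvd Lcm (k ` {1..n})"
        using dk[of y] by (meson dvd_Lcm dvd_trans imageI)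
    qed
    ultimately show ?thesis by simp
  qed
  have stepA: "(\<Prod>i = 1..n. \<Sum>d | d dvd k i \<and> d ^ a dvd j. dirichlet_conv (f i) moebius d)
      = (\<Sum>d\<in>D. (if L d ^ a dvd j then P d else 0))" for j
  proof -
    have "(\<Prod>i = 1..n. \<Sum>e | e dvd k i \<and> e ^ a dvd j. dirichlet_conv (f i) moebius e)
        = (\<Prod>i = 1..n. \<Sum>e\<in>{e. e dvd k i}. (if e ^ a dvd j then g i e else 0))"
    proof (rule prod.cong[OF refl])
      fix i assume i: "i \<in> {1..n}"
      have "{e. e dvd k i \<and> e ^ a dvd j} = {e \<in> {e. e dvd k i}. e ^ a dvd j}" by auto
      show "(\<Sum>e | e dvd k i \<and> e ^ a dvd j. dirichlet_conv (f i) moebius e)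
          = (\<Sum>e\<in>{e. e dvd k i}. (if e ^ a dvd j then g i e else 0))"
        unfolding g_def \<open>{e. e dvd k i \<and> e ^ a dvd j} = {e \<in> {e. e dvd k i}. e ^ a dvd j}\<close>
        by (rule sum.inter_filter[OF fin_dv[OF i]])
    qed
    also have "\<dots> = (\<Sum>d\<in>D. \<Prod>i = 1..n. (if d i ^ a dvd j then g i (d i) else 0))"
      unfolding D_def using fin_dv by (intro prod_sum_PiE) auto
    also have "\<dots> = (\<Sum>d\<in>D. (if L d ^ a dvd j then P d else 0))"
      by (intro sum.cong refl) (simp add: prod_if_zero Lcm_pow_dvd L_def P_def)
    finally show ?thesis .
  qed
  define N where "N d = K ^ a div L d ^ a" for d
  have KN: "K ^ a = L d ^ a * N d" if "d \<in> D" for d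
  proof -
    have "L d ^ a dvd K ^ a" using Ld[OF that] by (simp add: dvd_power_same)
    then show ?thesis unfolding N_def by simp
  qed
  have stepB: "(\<Sum>j = 1..K ^ a. of_nat j ^ r *
         (\<Prod>i = 1..n. \<Sum>d | d dvd k i \<and> d ^ a dvd j. dirichlet_conv (f i) moebius d))
      = (\<Sum>d\<in>D. P d * (of_nat (L d) ^ (a * r) * (\<Sum>t = 1..N d. of_nat t ^ r)))"
  proof -
    have "(\<Sum>j = 1..K ^ a. of_nat j ^ r *
         (\<Prod>i = 1..n. \<Sum>d | d dvd k i \<and> d ^ a dvd j. dirichlet_conv (f i) moebius d))
        = (\<Sum>j = 1..K ^ a. \<Sum>d\<in>D. of_nat j ^ r * (if L d ^ a dvd j then P d else 0))"
      unfolding stepA sum_distrib_left ..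
    also have "\<dots> = (\<Sum>d\<in>D. \<Sum>j = 1..K ^ a. of_nat j ^ r * (if L d ^ a dvd j then P d else 0))"
      by (rule sum.swap)
    also have "\<dots> = (\<Sum>d\<in>D. P d * (of_nat (L d) ^ (a * r) * (\<Sum>t = 1..N d. of_nat t ^ r)))"
    proof (rule sum.cong[OF refl])
      fix d assume d: "d \<in> D"
      have "(\<Sum>j = 1..K ^ a. of_nat j ^ r * (if L d ^ a dvd j then P d else 0))
          = P d * (\<Sum>j = 1..L d ^ a * N d. (if L d ^ a dvd j then (of_nat j ^ r :: complex) else 0))"
        unfolding KN[OF d, symmetric] sum_distrib_left by (intro sum.cong refl) auto
      also have "(\<Sum>j = 1..L d ^ a * N d. (if L d ^ a dvd j then (of_nat j ^ r :: complex) else 0))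
          = (\<Sum>t = 1..N d. of_nat (L d ^ a * t) ^ r)"
        using Ld[OF d] by (intro mult_sum) simp
      also have "\<dots> = of_nat (L d) ^ (a * r) * (\<Sum>t = 1..N d. of_nat t ^ r)"
        by (simp add: sum_distrib_left power_mult_distrib power_mult)
      finally show "(\<Sum>j = 1..K ^ a. of_nat j ^ r * (if L d ^ a dvd j then P d else 0))
          = P d * (of_nat (L d) ^ (a * r) * (\<Sum>t = 1..N d. of_nat t ^ r))" .
    qed
    finally show ?thesis .
  qed
  have stepC: "1 / of_nat K ^ (a * r) * (P d * (of_nat (L d) ^ (a * r) * (\<Sum>t = 1..N d. of_nat t ^ r)))
      = P d / 2 + 1 / of_nat (r + 1) * (\<Sum>m = 0..r div 2. C m / of_nat K powi E m * (of_nat (L d) powi E m * P d))"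
    if d: "d \<in> D" for d
  proof -
    define x :: complex where "x = of_nat K"
    define y :: complex where "y = of_nat (L d)"
    have x0: "x \<noteq> 0" using K0 by (simp add: x_def)
    have y0: "y \<noteq> 0" using Ld[OF d] by (simp add: y_def)
    have Nd: "(of_nat (N d) :: complex) = x ^ a / y ^ a"
    proof -
      have "x ^ a = y ^ a * of_nat (N d)" unfolding x_def y_def
        using KN[OF d] by (metis of_nat_mult of_nat_power)
      then show ?thesis using y0 by (simp add: field_simps)
    qed
    have h1: "1 / x ^ (a * r) * y ^ (a * r) * (x ^ a / y ^ a) ^ r = 1"
      using x0 y0 by (simp add: power_divide power_mult[symmetric] mult.commute)
    have h2: "1 / x ^ (a * r) * y ^ (a * r) * (C m * (x ^ a / y ^ a) ^ (r + 1 - 2 * m))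
        = C m / x powi E m * (y powi E m)" if "m \<in> {0..r div 2}" for m
    proof -
      have "2 * m \<le> r" using that by auto
      note pi = pow_identity[OF x0 y0 this, of a]
      have "1 / x ^ (a * r) * y ^ (a * r) * (C m * (x ^ a / y ^ a) ^ (r + 1 - 2 * m))
          = C m * (1 / x ^ (a * r) * y ^ (a * r) * (x ^ a / y ^ a) ^ (r + 1 - 2 * m))"
        by (simp only: mult_ac)
      also have "\<dots> = C m * (y powi E m / x powi E m)" unfolding pi E_def ..
      also have "\<dots> = C m / x powi E m * (y powi E m)" by simp
      finally show ?thesis .
    qed
    have Sd: "(\<Sum>t = 1..N d. of_nat t ^ r :: complex) = (x ^ a / y ^ a) ^ r / 2 +
       1 / of_nat (r + 1) * (\<Sum>m=0..r div 2. C m * (x ^ a / y ^ a) ^ (r + 1 - 2 * m))"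
      unfolding faulhaber[OF assms(3)] Nd C_def by (simp add: mult.assoc)
    have "1 / x ^ (a * r) * (P d * (y ^ (a * r) * (\<Sum>t = 1..N d. of_nat t ^ r)))
        = P d * (1 / x ^ (a * r) * y ^ (a * r) * (\<Sum>t = 1..N d. of_nat t ^ r))"
      by (simp add: algebra_simps)
    also have "\<dots> = P d * (1 / x ^ (a * r) * y ^ (a * r) * ((x ^ a / y ^ a) ^ r / 2 +
       1 / of_nat (r + 1) * (\<Sum>m=0..r div 2. C m * (x ^ a / y ^ a) ^ (r + 1 - 2 * m))))"
      by (simp only: Sd)
    also have "1 / x ^ (a * r) * y ^ (a * r) * ((x ^ a / y ^ a) ^ r / 2 +
       1 / of_nat (r + 1) * (\<Sum>m=0..r div 2. C m * (x ^ a / y ^ a) ^ (r + 1 - 2 * m)))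
       = (1 / x ^ (a * r) * y ^ (a * r) * (x ^ a / y ^ a) ^ r) / 2 +
         1 / of_nat (r + 1) * (\<Sum>m=0..r div 2. 1 / x ^ (a * r) * y ^ (a * r) * (C m * (x ^ a / y ^ a) ^ (r + 1 - 2 * m)))"
      by (simp add: sum_distrib_left algebra_simps)
    also have "\<dots> = 1 / 2 + 1 / of_nat (r + 1) * (\<Sum>m=0..r div 2. C m / x powi E m * (y powi E m))"
      using h1 h2 by simp
    also have "P d * (1 / 2 + 1 / of_nat (r + 1) * (\<Sum>m=0..r div 2. C m / x powi E m * (y powi E m)))
       = P d / 2 + 1 / of_nat (r + 1) * (\<Sum>m = 0..r div 2. C m / x powi E m * (y powi E m * P d))"
    proof -
      have "P d * (\<Sum>m=0..r div 2. C m / x powi E m * (y powi E m)) = (\<Sum>m = 0..r div 2. C m / x powi E m * (y powi E m * P d))"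
        by (simp add: sum_distrib_left mult_ac)
      then show ?thesis by (simp add: distrib_left mult_ac)
    qed
    finally show ?thesis unfolding x_def y_def .
  qed
  have sumP: "(\<Sum>d\<in>D. P d) = (\<Prod>i = 1..n. f i (k i))"
  proof -
    have "(\<Prod>i = 1..n. f i (k i)) = (\<Prod>i = 1..n. \<Sum>e\<in>{e. e dvd k i}. g i e)"
      by (intro prod.cong refl) (simp add: g_def mobius_inversion kpos)
    also have "\<dots> = (\<Sum>d\<in>D. P d)"
      unfolding D_def P_def using fin_dv by (intro prod_sum_PiE) auto
    finally show ?thesis by simp
  qed
  have "(1 / of_nat K ^ (a * r)) *
      (\<Sum>j = 1..K ^ a. of_nat j ^ r *
         (\<Prod>i = 1..n. \<Sum>d | d dvd k i \<and> d ^ a dvd j. dirichlet_conv (f i) moebius d))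
      = (\<Sum>d\<in>D. P d / 2 + 1 / of_nat (r + 1) * (\<Sum>m = 0..r div 2. C m / of_nat K powi E m * (of_nat (L d) powi E m * P d)))"
    unfolding stepB sum_distrib_left[of "1 / of_nat K ^ (a * r)"] by (rule sum.cong[OF refl], rule stepC)
  also have "\<dots> = (1/2) * (\<Sum>d\<in>D. P d) + 1 / of_nat (r + 1) *
      (\<Sum>m = 0..r div 2. C m / of_nat K powi E m * (\<Sum>d\<in>D. of_nat (L d) powi E m * P d))"
    by (simp add: sum.distrib sum_distrib_left sum_divide_distrib sum.swap[of _ D])
  finally show ?thesis unfolding sumP by (simp add: C_def E_def D_def L_def P_def g_def)
qed

end
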